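(* Let $n,k\ge 0$ be integers, and let $W$ be the group of signed permutations of $n+k$ letters acting on $\mathbf{Z}^{n+k}$, with $\rho=(n+k,n+k-1,\dots,2,1)$. Let $\mu$ be a partition with $\mu_1\le k$ and $i_{2n}(\mu)<\infty$, and put $\lambda=\tau_{2n}(\mu)$. Then there exists $w=w_\mu\in W$ such that (i) $w(\rho)_1>w(\rho)_2>\cdots>w(\rho)_k$ and $w(\rho)_{k+1}>\cdots>w(\rho)_{k+n}>0$; (ii) $\ell(w)=|\mu|-i_{2n}(\mu)$; (iii) $w(\rho)-\rho=(-\mu^\dagger_k,\dots,-\mu^\dagger_2,-\mu^\dagger_1,\lambda_1,\lambda_2,\dots,\lambda_n)$.
   Context: $W$ (the Weyl group of type $\mathrm{C}_{n+k}$) is generated by the simple reflections $s_i$ ($1\le i\le n+k-1$) swapping positions $i$ and $i+1$, and $s_{n+k}$ negating the last entry; $\ell(w)$ is the Coxeter length with respect to these generators. Equivalently, $\ell(w)=\mathrm{inv}(w)+\mathrm{neg}(w)+\mathrm{nsp}(w)$, where, writing $a=w(\rho)$, $\mathrm{inv}(w)=\#\{i<j: a_i<a_j\}$, $\mathrm{neg}(w)=\#\{i: a_i<0\}$, $\mathrm{nsp}(w)=\#\{i<j: a_i+a_j<0\}$. For a partition $\mu$, $\mu^\dagger$ is its transpose, $\mu_j^\dagger$ its $j$th part (zero if $j>\ell(\mu^\dagger)$), $|\mu|$ its size, $\ell(\mu)$ its number of nonzero parts. Modification rule: if $\ell(\mu)\le n$, $i_{2n}(\mu)=0$ and $\tau_{2n}(\mu)=\mu$.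 If $\ell(\mu)>n$, let $R_\mu$ be the border strip (connected skew diagram with no $2\times2$ square) of $2(\ell(\mu)-n-1)$ boxes along the rim of $\mu$ starting at the first box of the last row of $\mu$, if it exists. If $R_\mu$ exists, is nonempty, and $\mu\setminus R_\mu$ is a partition, then $i_{2n}(\mu)=c(R_\mu)+i_{2n}(\mu\setminus R_\mu)$ and $\tau_{2n}(\mu)=\tau_{2n}(\mu\setminus R_\mu)$, with $c(R_\mu)$ the number of columns of $R_\mu$; otherwise $i_{2n}(\mu)=\infty$ and $\tau_{2n}(\mu)$ is undefined. *)

theory Defs
  imports Main
begin

definition is_partition :: "nat list \<Rightarrow> bool" where
  "is_partition mu \<longleftrightarrow> sorted_wrt (\<lambda>a b. b \<le> a) mu \<and> 0 \<notin> set mu"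

definition part :: "nat list \<Rightarrow> nat \<Rightarrow> nat" where
  "part mu i = (if 1 \<le> i \<and> i \<le> length mu then mu ! (i - 1) else 0)"

definition conj_part :: "nat list \<Rightarrow> nat \<Rightarrow> nat" where
  "conj_part mu j = card {i. 1 \<le> i \<and> i \<le> length mu \<and> j \<le> part mu i}"

definition diagram :: "nat list \<Rightarrow> (nat \<times> nat) set" where
  "diagram mu = {(i, j). 1 \<le> i \<and> i \<le> length mu \<and> 1 \<le> j \<and> j \<le> part mu i}"

text \<open>Walk along the rim from the first box of the last row towards the
  north-east: move right if possible, otherwise move up.\<close>
definition rim_step :: "nat list \<Rightarrow> nat \<times> nat \<Rightarrow> nat \<times> nat" where
  "rim_step mu b = (case b of (i, j) \<Rightarrow>
     if j + 1 \<le> part mu i then (i, j + 1) else (i - 1, j))"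

definition rim_box :: "nat list \<Rightarrow> nat \<Rightarrow> nat \<times> nat" where
  "rim_box mu t = (rim_step mu ^^ t) (length mu, 1)"

text \<open>The border strip of h boxes along the rim exists iff the first h boxes
  of the walk lie in the diagram.\<close>
definition rim_strip_exists :: "nat list \<Rightarrow> nat \<Rightarrow> bool" where
  "rim_strip_exists mu h \<longleftrightarrow> (\<forall>t<h. rim_box mu t \<in> diagram mu)"

definition rim_strip :: "nat list \<Rightarrow> nat \<Rightarrow> (nat \<times> nat) set" where
  "rim_strip mu h = rim_box mu ` {..<h}"

definition ncols :: "(nat \<times> nat) set \<Rightarrow> nat" where
  "ncols R = card (snd ` R)"

text \<open>The modification rule as a relation: modif n mu i lam holds iff
  i_{2n}(mu) = i (finite) and tau_{2n}(mu) = lam.\<close>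
inductive modif :: "nat \<Rightarrow> nat list \<Rightarrow> nat \<Rightarrow> nat list \<Rightarrow> bool" for n :: nat where
  base: "length mu \<le> n \<Longrightarrow> modif n mu 0 mu"
| step: "\<lbrakk> n < length mu;
           h = 2 * (length mu - n - 1);
           rim_strip_exists mu h;
           rim_strip mu h \<noteq> {};
           is_partition nu;
           diagram nu = diagram mu - rim_strip mu h;
           modif n nu i lam \<rbrakk>
         \<Longrightarrow> modif n mu (ncols (rim_strip mu h) + i) lam"

definition rho :: "nat \<Rightarrow> int list" where
  "rho N = map (\<lambda>i. int (N - i)) [0..<N]"

definition signed_perms :: "nat \<Rightarrow> (int list \<Rightarrow> int list) set" where
  "signed_perms N = {w. \<exists>\<sigma> (\<epsilon> :: nat \<Rightarrow> int).
      bij_betw \<sigma> {..<N} {..<N} \<and> (\<forall>i. \<epsilon> i = 1 \<or> \<epsilon> i = -1) \<and>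
      (\<forall>x. length x = N \<longrightarrow> w x = map (\<lambda>i. \<epsilon> i * x ! \<sigma> i) [0..<N])}"

definition inv_stat :: "int list \<Rightarrow> nat" where
  "inv_stat a = card {(i, j). i < j \<and> j < length a \<and> a ! i < a ! j}"

definition neg_stat :: "int list \<Rightarrow> nat" where
  "neg_stat a = card {i. i < length a \<and> a ! i < 0}"

definition nsp_stat :: "int list \<Rightarrow> nat" where
  "nsp_stat a = card {(i, j). i < j \<and> j < length a \<and> a ! i + a ! j < 0}"

text \<open>Coxeter length of w in type C_N, via the formula inv + neg + nsp of w(rho).\<close>
definition coxeter_length :: "nat \<Rightarrow> (int list \<Rightarrow> int list) \<Rightarrow> nat" where
  "coxeter_length N w = (let a = w (rho N) in inv_stat a + neg_stat a + nsp_stat a)"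

end

theory Submission
  imports Defs
begin



fun pc :: "('a \<Rightarrow> 'a \<Rightarrow> bool) \<Rightarrow> 'a list \<Rightarrow> nat" where
  "pc R [] = 0"
| "pc R (x # xs) = length (filter (R x) xs) + pc R xs"

lemma pc_card: "card {(i,j). i<j \<and> j<length a \<and> R (a!i) (a!j)} = pc R a"
proof (induction a)
  case Nil show ?case by simp
next
  case (Cons x xs)
  let ?S = "{(i,j). i<j \<and> j<length xs \<and> R (xs!i) (xs!j)}"
  let ?T = "{j. j<length xs \<and> R x (xs!j)}"
  have eq: "{(i,j). i<j \<and> j<length (x#xs) \<and> R ((x#xs)!i) ((x#xs)!j)} =
     (\<lambda>j. (0, Suc j)) ` ?T \<union> (\<lambda>(i,j). (Suc i, Suc j)) ` ?S"
  proof (rule set_eqI)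
    fix p :: "nat \<times> nat"
    obtain i j where p: "p = (i,j)" by (cases p)
    show "p \<in> {(i,j). i<j \<and> j<length (x#xs) \<and> R ((x#xs)!i) ((x#xs)!j)} \<longleftrightarrow>
       p \<in> (\<lambda>j. (0, Suc j)) ` ?T \<union> (\<lambda>(i,j). (Suc i, Suc j)) ` ?S"
      unfolding p by (cases i; cases j) (auto simp: image_iff)
  qed
  have fS: "finite ?S" by (rule finite_subset[of _ "{..<length xs} \<times> {..<length xs}"]) auto
  have fT: "finite ?T" by auto
  have d: "(\<lambda>j. (0, Suc j)) ` ?T \<inter> (\<lambda>(i,j). (Suc i, Suc j)) ` ?S = {}" by auto
  have i1: "inj_on (\<lambda>j. (0::nat, Suc j)) ?T" by (auto simp: inj_on_def)
  have i2: "inj_on (\<lambda>(i,j). (Suc i, Suc j)) ?S" by (auto simp: inj_on_def)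
  have "card ((\<lambda>j. (0, Suc j)) ` ?T \<union> (\<lambda>(i,j). (Suc i, Suc j)) ` ?S) = card ?T + card ?S"
    using card_Un_disjoint[OF finite_imageI[OF fT] finite_imageI[OF fS] d]
      card_image[OF i1] card_image[OF i2] by simp
  moreover have "card ?T = length (filter (R x) xs)" by (simp add: length_filter_conv_card)
  ultimately show ?case using eq Cons.IH by simp
qed

lemma pc_append: "pc R (A @ B) = pc R A + pc R B + sum_list (map (\<lambda>x. length (filter (R x) B)) A)"
  by (induction A) auto

lemma inv_pc: "inv_stat a = pc (<) a"
  unfolding inv_stat_def using pc_card[where R="(<)" and a=a] by simp
lemma nsp_pc: "nsp_stat a = pc (\<lambda>x y. x + y < 0) a"
  unfolding nsp_stat_def using pc_card[where R="(\<lambda>x y. x + y < 0)" and a=a] by simp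
lemma neg_filter: "neg_stat a = length (filter (\<lambda>x. x < 0) a)"
  unfolding neg_stat_def by (simp add: length_filter_conv_card)




definition Tf :: "int \<Rightarrow> int \<Rightarrow> int" where
  "Tf x y = (if x < y then 1 else 0) + (if x + y < 0 then 1 else 0)"

definition crs :: "int list \<Rightarrow> int list \<Rightarrow> int" where
  "crs A B = sum_list (map (\<lambda>x. sum_list (map (Tf x) B)) A)"

definition ell :: "int list \<Rightarrow> int" where
  "ell a = int (inv_stat a + neg_stat a + nsp_stat a)"

lemma len_filter_int: "int (length (filter P xs)) = sum_list (map (\<lambda>y. if P y then 1 else 0) xs)"
  by (induction xs) auto

lemma pc_append_int: "int (pc R (A @ B)) = int (pc R A) + int (pc R B) +
   sum_list (map (\<lambda>x. sum_list (map (\<lambda>y. if R x y then 1 else 0) B)) A)"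
  unfolding pc_append by (induction A) (auto simp: len_filter_int)

lemma ell_append: "ell (A @ B) = ell A + ell B + crs A B"
proof -
  have "crs A B = sum_list (map (\<lambda>x. sum_list (map (\<lambda>y. if x < y then 1 else 0) B)) A)
     + sum_list (map (\<lambda>x. sum_list (map (\<lambda>y. if x + y < 0 then 1 else 0) B)) A)"
    unfolding crs_def Tf_def by (simp add: sum_list_addf)
  then show ?thesis
    unfolding ell_def inv_pc nsp_pc neg_filter
    using pc_append_int[of "(<)" A B] pc_append_int[of "\<lambda>x y. x + y < 0" A B]
    by simp
qed

lemma ell_single: "ell [x] = (if x < 0 then 1 else 0)"
  unfolding ell_def inv_pc nsp_pc neg_filter by simp

lemma crs_append1: "crs (A @ B) C = crs A C + crs B C"
  unfolding crs_def by simp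
lemma crs_append2: "crs A (B @ C) = crs A B + crs A C"
  unfolding crs_def by (simp add: sum_list_addf)
lemma crs_Cons1: "crs (x # A) C = crs [x] C + crs A C"
  unfolding crs_def by simp
lemma crs_Cons2: "crs A (x # C) = crs A [x] + crs A C"
  unfolding crs_def by (simp add: sum_list_addf)
lemma crs_Nil[simp]: "crs [] C = 0" "crs A [] = 0"
  unfolding crs_def by simp_all

lemma crs_single1: "crs [x] B = sum_list (map (Tf x) B)"
  unfolding crs_def by simp
lemma crs_single2: "crs A [y] = sum_list (map (\<lambda>x. Tf x y) A)"
  unfolding crs_def by simp

lemma sum_list_map_const: "(\<And>x. x \<in> set xs \<Longrightarrow> f x = c) \<Longrightarrow> sum_list (map f xs) = int (length xs) * c"
  by (induction xs) (auto simp: algebra_simps)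

lemma ell_move:
  fixes m :: int
  assumes "m > 0" and Q: "\<forall>z\<in>set Q. - m < z \<and> z < m" and Y: "\<forall>y\<in>set Y. y > 0 \<and> y \<noteq> m"
  shows "ell (P @ Q @ [-m] @ Y) = ell (P @ [m] @ Q @ Y) + 1 + int (length Q) + 2 * int (length (filter (\<lambda>y. y < m) Y))"
proof -
  have e1: "ell (P @ Q @ [-m] @ Y) = ell P + ell Q + 1 + ell Y + crs P Q + crs P [-m] + crs P Y
     + crs Q [-m] + crs Q Y + crs [-m] Y"
    unfolding ell_append crs_append1 crs_append2 ell_single using assms(1) by simp
  have e2: "ell (P @ [m] @ Q @ Y) = ell P + ell Q + ell Y + crs P Q + crs P [m] + crs P Y
     + crs [m] Q + crs Q Y + crs [m] Y"
    unfolding ell_append crs_append1 crs_append2 ell_single using assms(1) by simp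
  have a: "crs P [-m] = crs P [m]" unfolding crs_single2
    by (rule arg_cong[where f=sum_list], rule map_cong) (auto simp: Tf_def)
  have b: "crs Q [-m] = int (length Q)" unfolding crs_single2
    by (rule sum_list_map_const[where c=1, simplified]) (use Q in \<open>auto simp: Tf_def\<close>)
  have c: "crs [m] Q = 0" unfolding crs_single1
    by (rule sum_list_map_const[where c=0, simplified]) (use Q in \<open>auto simp: Tf_def\<close>)
  have d: "crs [-m] Y - crs [m] Y = int (length Y) + int (length (filter (\<lambda>y. y < m) Y)) - int (length (filter (\<lambda>y. m < y) Y))"
    unfolding crs_single1 len_filter_int using Y assms(1)
    by (induction Y) (auto simp: Tf_def)
  have f: "int (length Y) = int (length (filter (\<lambda>y. y < m) Y)) + int (length (filter (\<lambda>y. m < y) Y))"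
    unfolding len_filter_int using Y by (induction Y) auto
  show ?thesis using e1 e2 a b c d f by linarith
qed

lemma ell_swap:
  fixes v :: int
  assumes "v > 0" and Z: "\<forall>z\<in>set (A @ B @ C). z > 0 \<and> z \<noteq> v \<and> z \<noteq> v + 1"
  shows "ell (A @ [v] @ B @ [v+1] @ C) = ell (A @ [v+1] @ B @ [v] @ C) + 1"
proof -
  have e1: "ell (A @ [v] @ B @ [v+1] @ C) = ell A + ell B + ell C + crs A [v] + crs A B + crs A [v+1] + crs A C
     + crs [v] B + crs [v] [v+1] + crs [v] C + crs B [v+1] + crs B C + crs [v+1] C"
    unfolding ell_append crs_append1 crs_append2 ell_single using assms(1) by simp
  have e2: "ell (A @ [v+1] @ B @ [v] @ C) = ell A + ell B + ell C + crs A [v+1] + crs A B + crs A [v] + crs A C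
     + crs [v+1] B + crs [v+1] [v] + crs [v+1] C + crs B [v] + crs B C + crs [v] C"
    unfolding ell_append crs_append1 crs_append2 ell_single using assms(1) by simp
  have 1: "crs [v] B = crs [v+1] B" unfolding crs_single1
  proof (rule arg_cong[where f=sum_list], rule map_cong)
    fix x assume "x \<in> set B"
    then have "x > 0" "x \<noteq> v" "x \<noteq> v + 1" using Z by auto
    then show "Tf v x = Tf (v + 1) x" using assms(1) unfolding Tf_def by auto
  qed simp
  have 2: "crs B [v+1] = crs B [v]" unfolding crs_single2
  proof (rule arg_cong[where f=sum_list], rule map_cong)
    fix x assume "x \<in> set B"
    then have "x > 0" "x \<noteq> v" "x \<noteq> v + 1" using Z by auto
    then show "Tf x (v + 1) = Tf x v" using assms(1) unfolding Tf_def by auto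
  qed simp
  have 3: "crs [v] [v+1] = 1" "crs [v+1] [v] = 0" using assms(1) by (auto simp: crs_def Tf_def)
  show ?thesis using e1 e2 1 2 3 by linarith
qed




lemma part_mono:
  assumes "is_partition mu" "1 \<le> i" "i \<le> j"
  shows "part mu j \<le> part mu i"
proof (cases "j \<le> length mu")
  case True
  have "sorted_wrt (\<lambda>a b. b \<le> a) mu" using assms(1) unfolding is_partition_def by simp
  then have "i - 1 \<le> j - 1 \<Longrightarrow> j - 1 < length mu \<Longrightarrow> mu ! (j - 1) \<le> mu ! (i - 1)"
    by (metis le_neq_implies_less order_refl sorted_wrt_nth_less)
  then show ?thesis using True assms unfolding part_def by auto
next
  case False
  then show ?thesis unfolding part_def by auto
qed

lemma part_pos:
  assumes "is_partition mu" "1 \<le> i" "i \<le> length mu"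
  shows "1 \<le> part mu i"
proof -
  have "mu ! (i - 1) \<in> set mu" using assms by auto
  then have "mu ! (i - 1) \<noteq> 0" using assms(1) unfolding is_partition_def by metis
  then show ?thesis using assms unfolding part_def by auto
qed

lemma part_zero: "length mu < i \<Longrightarrow> part mu i = 0"
  unfolding part_def by auto

lemma part_nz: "part mu i \<noteq> 0 \<Longrightarrow> 1 \<le> i \<and> i \<le> length mu"
  unfolding part_def by (auto split: if_splits)

lemma conj_part_iff:
  assumes "is_partition mu" "1 \<le> s" "1 \<le> i"
  shows "i \<le> conj_part mu s \<longleftrightarrow> s \<le> part mu i"
proof -
  let ?S = "{i. 1 \<le> i \<and> i \<le> length mu \<and> s \<le> part mu i}"
  have fin: "finite ?S" by (rule finite_subset[of _ "{..length mu}"]) auto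
  have mem: "i \<in> ?S \<longleftrightarrow> s \<le> part mu i" if i: "1 \<le> i" for i
  proof
    assume "s \<le> part mu i"
    then have "part mu i \<noteq> 0" using assms(2) by simp
    then have "i \<le> length mu" using part_nz by blast
    then show "i \<in> ?S" using i \<open>s \<le> part mu i\<close> by simp
  qed simp
  have "\<exists>c. ?S = {1..c}"
  proof (cases "?S = {}")
    case True then show ?thesis by (intro exI[of _ 0]) simp
  next
    case False
    define c where "c = Max ?S"
    have cS: "c \<in> ?S" unfolding c_def using Max_in[OF fin False] .
    have "?S = {1..c}"
    proof (rule set_eqI)
      fix x show "x \<in> ?S \<longleftrightarrow> x \<in> {1..c}"
      proof
        assume x: "x \<in> ?S"
        have "x \<le> c" unfolding c_def by (rule Max_ge[OF fin x])
        moreover have "1 \<le> x" using x by simp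
        ultimately show "x \<in> {1..c}" by simp
      next
        assume x: "x \<in> {1..c}"
        then have x1: "1 \<le> x" and xc: "x \<le> c" by simp_all
        have "part mu c \<le> part mu x" by (rule part_mono[OF assms(1) x1 xc])
        moreover have "s \<le> part mu c" using cS by simp
        ultimately have "s \<le> part mu x" by simp
        then show "x \<in> ?S" using mem[OF x1] by simp
      qed
    qed
    then show ?thesis by blast
  qed
  then obtain c where c: "?S = {1..c}" by blast
  have "conj_part mu s = card ?S" unfolding conj_part_def by simp
  also have "\<dots> = c" unfolding c by simp
  finally have cc: "conj_part mu s = c" .
  have "i \<le> c \<longleftrightarrow> i \<in> ?S" unfolding c using assms(3) by simp
  then show ?thesis using mem[OF assms(3)] cc by simp
qed

lemma nat_eq_by_iff:
  assumes "\<And>i::nat. 1 \<le> i \<Longrightarrow> i \<le> a \<longleftrightarrow> i \<le> b" shows "a = b"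
proof -
  have "a \<le> b"
  proof (cases "a = 0")
    case False then have "1 \<le> a" by simp
    from assms[OF this] show ?thesis by simp
  qed simp
  moreover have "b \<le> a"
  proof (cases "b = 0")
    case False then have "1 \<le> b" by simp
    from assms[OF this] show ?thesis by simp
  qed simp
  ultimately show ?thesis by simp
qed

lemma conj_part_mono:
  assumes "is_partition mu" "1 \<le> s" "s \<le> s'"
  shows "conj_part mu s' \<le> conj_part mu s"
proof (cases "conj_part mu s' = 0")
  case False
  then have "1 \<le> conj_part mu s'" by simp
  then have "s' \<le> part mu (conj_part mu s')" using conj_part_iff[OF assms(1), of s' "conj_part mu s'"] assms by simp
  then have "s \<le> part mu (conj_part mu s')" using assms by simp
  then show ?thesis using conj_part_iff[OF assms(1) assms(2) \<open>1 \<le> conj_part mu s'\<close>] by simp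
qed simp

lemma conj_part_1:
  assumes "is_partition mu" shows "conj_part mu 1 = length mu"
proof (rule nat_eq_by_iff)
  fix i :: nat assume "1 \<le> i"
  then show "i \<le> conj_part mu 1 \<longleftrightarrow> i \<le> length mu"
    using conj_part_iff[OF assms, of 1 i] part_pos[OF assms, of i] part_nz[of mu i] by auto
qed

lemma conj_part_le_len:
  assumes "is_partition mu" "1 \<le> s" shows "conj_part mu s \<le> length mu"
  using conj_part_mono[OF assms(1) order_refl assms(2)] conj_part_1[OF assms(1)] by simp

lemma sum_list_card_diagram: "sum_list mu = card (diagram mu)"
proof -
  have d: "diagram mu = Sigma {1..length mu} (\<lambda>i. {1..part mu i})"
    unfolding diagram_def by auto
  have "card (diagram mu) = (\<Sum>i\<in>{1..length mu}. part mu i)"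
    unfolding d by (simp add: card_SigmaI)
  also have "\<dots> = (\<Sum>i\<in>{1..length mu}. mu ! (i - 1))"
    by (rule sum.cong) (auto simp: part_def)
  also have "\<dots> = (\<Sum>i<length mu. mu ! i)"
  proof -
    have "(\<Sum>i\<in>{1..length mu}. mu ! (i - 1)) = (\<Sum>i\<in>Suc ` {..<length mu}. mu ! (i - 1))"
      by (simp add: image_Suc_lessThan)
    also have "\<dots> = (\<Sum>i<length mu. mu ! i)" by (subst sum.reindex) auto
    finally show ?thesis .
  qed
  also have "\<dots> = sum_list mu" by (simp add: sum_list_sum_nth atLeast0LessThan)
  finally show ?thesis by simp
qed

lemma diagram_mem: "(i, j) \<in> diagram mu \<longleftrightarrow> 1 \<le> i \<and> i \<le> length mu \<and> 1 \<le> j \<and> j \<le> part mu i"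
  unfolding diagram_def by simp

lemma diagram_mem_part: "1 \<le> j \<Longrightarrow> (i, j) \<in> diagram mu \<longleftrightarrow> 1 \<le> i \<and> j \<le> part mu i"
  unfolding diagram_def using part_nz[of mu i] by auto




definition Xv :: "nat \<Rightarrow> nat list \<Rightarrow> nat \<Rightarrow> int" where
  "Xv n mu s = int n + int s - int (conj_part mu s)"
definition Yv :: "nat \<Rightarrow> nat list \<Rightarrow> nat \<Rightarrow> int" where
  "Yv n lam r = int (part lam r) + int n - int r + 1"
definition avec :: "nat \<Rightarrow> nat \<Rightarrow> nat list \<Rightarrow> nat list \<Rightarrow> int list" where
  "avec n k mu lam = map (\<lambda>t. Xv n mu (k - t)) [0..<k] @ map (\<lambda>r. Yv n lam (Suc r)) [0..<n]"

lemma avec_length[simp]: "length (avec n k mu lam) = k + n"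
  unfolding avec_def by simp
lemma avec_nth1: "t < k \<Longrightarrow> avec n k mu lam ! t = Xv n mu (k - t)"
  unfolding avec_def by (simp add: nth_append)
lemma avec_nth2: "k \<le> t \<Longrightarrow> t < k + n \<Longrightarrow> avec n k mu lam ! t = Yv n lam (t - k + 1)"
proof -
  assume a: "k \<le> t" "t < k + n"
  then have "t - k < n" by linarith
  then show ?thesis unfolding avec_def using a by (simp add: nth_append)
qed

definition rem :: "nat list \<Rightarrow> nat list" where
  "rem mu = (if last mu = 1 then butlast mu else butlast mu @ [last mu - 1])"

lemma last_part: "mu \<noteq> [] \<Longrightarrow> last mu = part mu (length mu)"
proof -
  assume "mu \<noteq> []"
  then have "1 \<le> length mu" by (cases mu) auto
  then show ?thesis unfolding part_def using \<open>mu \<noteq> []\<close> by (simp add: last_conv_nth)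
qed

lemma rem_part:
  assumes "mu \<noteq> []"
  shows "part (rem mu) i = (if i = length mu then part mu i - 1 else part mu i)"
proof -
  have "1 \<le> length mu" using assms by (cases mu) auto
  then show ?thesis using assms unfolding rem_def part_def
    by (auto simp: nth_append nth_butlast last_conv_nth)
qed

lemma rem_sum: "mu \<noteq> [] \<Longrightarrow> 0 \<notin> set mu \<Longrightarrow> sum_list (rem mu) + 1 = sum_list mu"
proof -
  assume a: "mu \<noteq> []" "0 \<notin> set mu"
  then have "last mu \<noteq> 0" using last_in_set by metis
  moreover have "sum_list (butlast mu @ [last mu]) = sum_list (butlast mu) + last mu" by simp
  then have "sum_list mu = sum_list (butlast mu) + last mu" using a(1) by simp
  ultimately show ?thesis unfolding rem_def by auto
qed

lemma rem_len: "mu \<noteq> [] \<Longrightarrow> length (rem mu) \<le> length mu"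
proof -
  assume "mu \<noteq> []"
  then have "1 \<le> length mu" by (cases mu) auto
  then show ?thesis unfolding rem_def by auto
qed

lemma rem_partition:
  assumes "is_partition mu" "mu \<noteq> []"
  shows "is_partition (rem mu)"
proof -
  have s: "sorted_wrt (\<lambda>a b. b \<le> a) mu" and z: "0 \<notin> set mu" using assms(1) unfolding is_partition_def by auto
  have "sorted_wrt (\<lambda>a b. b \<le> a) (butlast mu @ [last mu])" using s assms(2) by simp
  then have sb: "sorted_wrt (\<lambda>a b. b \<le> a) (butlast mu)" and ge: "\<forall>x\<in>set (butlast mu). last mu \<le> x"
    by (simp_all add: sorted_wrt_append)
  have zb: "0 \<notin> set (butlast mu)" using z in_set_butlastD by metis
  show ?thesis
  proof (cases "last mu = 1")
    case True then show ?thesis unfolding rem_def is_partition_def using sb zb by simp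
  next
    case False
    have "last mu \<noteq> 0" using z assms(2) last_in_set by metis
    then show ?thesis using False sb zb ge unfolding rem_def is_partition_def
      by (auto simp: sorted_wrt_append)
  qed
qed

lemma dec:
  assumes "i < j" "j < length xs"
  shows "xs = take i xs @ [xs!i] @ take (j - Suc i) (drop (Suc i) xs) @ [xs!j] @ drop (Suc j) xs"
proof -
  have 1: "drop i xs = xs!i # drop (Suc i) xs" using assms by (simp add: Cons_nth_drop_Suc)
  have 2: "drop j xs = xs!j # drop (Suc j) xs" using assms by (simp add: Cons_nth_drop_Suc)
  have 3: "drop (j - Suc i) (drop (Suc i) xs) = drop j xs" using assms by simp
  have "xs = take i xs @ drop i xs" by simp
  also have "drop i xs = [xs!i] @ drop (Suc i) xs" using 1 by simp
  also have "drop (Suc i) xs = take (j - Suc i) (drop (Suc i) xs) @ drop (j - Suc i) (drop (Suc i) xs)" by (rule append_take_drop_id[symmetric])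
  also have "drop (j - Suc i) (drop (Suc i) xs) = [xs!j] @ drop (Suc j) xs" using 2 3 by simp
  finally show ?thesis by simp
qed

lemma swap_decomp:
  assumes "i < j" "j < length xs"
  shows "\<exists>A B C. xs = A @ [xs!i] @ B @ [xs!j] @ C \<and> xs[i := a, j := b] = A @ [a] @ B @ [b] @ C"
proof -
  let ?ys = "xs[i := a, j := b]"
  have d1: "xs = take i xs @ [xs!i] @ take (j - Suc i) (drop (Suc i) xs) @ [xs!j] @ drop (Suc j) xs"
    by (rule dec[OF assms])
  have "?ys = take i ?ys @ [?ys!i] @ take (j - Suc i) (drop (Suc i) ?ys) @ [?ys!j] @ drop (Suc j) ?ys"
    by (rule dec) (use assms in auto)
  moreover have "take i ?ys = take i xs" using assms by simp
  moreover have "?ys ! i = a" "?ys ! j = b" using assms by (auto simp: nth_list_update)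
  moreover have "drop (Suc j) ?ys = drop (Suc j) xs" using assms by simp
  moreover have "take (j - Suc i) (drop (Suc i) ?ys) = take (j - Suc i) (drop (Suc i) xs)"
    by (rule nth_equalityI) (use assms in \<open>auto simp: nth_list_update\<close>)
  ultimately have "?ys = take i xs @ [a] @ take (j - Suc i) (drop (Suc i) xs) @ [b] @ drop (Suc j) xs"
    by simp
  then show ?thesis using d1 by blast
qed




definition PP :: "int list \<Rightarrow> nat \<Rightarrow> bool" where
  "PP a N \<longleftrightarrow> distinct (map abs a) \<and> set (map abs a) = {1..int N}"

lemma conj_part_last:
  assumes "is_partition mu" "mu \<noteq> []"
  shows "conj_part mu (last mu) = length mu"
proof (rule nat_eq_by_iff)
  fix i :: nat assume i: "1 \<le> i"
  have L: "1 \<le> length mu" using assms(2) by (cases mu) auto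
  have lp: "last mu = part mu (length mu)" by (rule last_part[OF assms(2)])
  have p1: "1 \<le> last mu" using part_pos[OF assms(1) L order_refl] lp by simp
  have "i \<le> conj_part mu (last mu) \<longleftrightarrow> last mu \<le> part mu i" by (rule conj_part_iff[OF assms(1) p1 i])
  also have "\<dots> \<longleftrightarrow> i \<le> length mu"
  proof
    assume "last mu \<le> part mu i"
    then have "part mu i \<noteq> 0" using p1 by simp
    then show "i \<le> length mu" using part_nz by blast
  next
    assume "i \<le> length mu"
    then show "last mu \<le> part mu i" using lp part_mono[OF assms(1) i] by simp
  qed
  finally show "i \<le> conj_part mu (last mu) \<longleftrightarrow> i \<le> length mu" .
qed

lemma rem_conj:
  assumes "is_partition mu" "mu \<noteq> []" "1 \<le> s"
  shows "conj_part (rem mu) s = (if s = last mu then length mu - 1 else conj_part mu s)"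
proof (rule nat_eq_by_iff)
  fix i :: nat assume i: "1 \<le> i"
  have L: "1 \<le> length mu" using assms(2) by (cases mu) auto
  have lp: "last mu = part mu (length mu)" by (rule last_part[OF assms(2)])
  have p1: "1 \<le> last mu" using part_pos[OF assms(1) L order_refl] lp by simp
  have cl: "conj_part mu (last mu) = length mu" by (rule conj_part_last[OF assms(1,2)])
  have rp: "is_partition (rem mu)" by (rule rem_partition[OF assms(1,2)])
  have A: "i \<le> conj_part (rem mu) s \<longleftrightarrow> s \<le> part (rem mu) i" by (rule conj_part_iff[OF rp assms(3) i])
  have B: "i \<le> conj_part mu s \<longleftrightarrow> s \<le> part mu i" by (rule conj_part_iff[OF assms(1) assms(3) i])
  have C: "i \<le> length mu \<longleftrightarrow> last mu \<le> part mu i" using cl conj_part_iff[OF assms(1) p1 i] by simp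
  have R: "part (rem mu) i = (if i = length mu then part mu i - 1 else part mu i)" by (rule rem_part[OF assms(2)])
  show "i \<le> conj_part (rem mu) s \<longleftrightarrow> i \<le> (if s = last mu then length mu - 1 else conj_part mu s)"
  proof (cases "s = last mu")
    case True
    then show ?thesis using A C R lp L p1 by auto
  next
    case False
    then show ?thesis using A B R lp by auto
  qed
qed

lemma Xv_pos:
  assumes "is_partition mu" "length mu \<le> n" "1 \<le> s"
  shows "0 < Xv n mu s"
  using conj_part_le_len[OF assms(1,3)] assms unfolding Xv_def by linarith

lemma avec_pos:
  assumes "is_partition mu" "length mu \<le> n"
  shows "\<forall>x\<in>set (avec n k mu mu). 0 < x"
  unfolding avec_def Yv_def using Xv_pos[OF assms] by auto

lemma avec_empty: "avec n k [] [] = map (\<lambda>t. int (n + k - t)) [0..<n + k]"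
proof (rule nth_equalityI)
  fix t assume "t < length (avec n k [] [])"
  then have t: "t < k + n" by simp
  have c0: "conj_part [] s = 0" for s unfolding conj_part_def by simp
  have p0: "part [] r = 0" for r unfolding part_def by simp
  show "avec n k [] [] ! t = map (\<lambda>t. int (n + k - t)) [0..<n + k] ! t"
  proof (cases "t < k")
    case True then show ?thesis using t by (simp add: avec_nth1 Xv_def c0)
  next
    case False then show ?thesis using t by (simp add: avec_nth2 Yv_def p0)
  qed
qed simp

lemma PP_rho: "PP (map (\<lambda>t. int (N - t)) [0..<N]) N"
proof -
  have "inj_on (\<lambda>t. int (N - t)) {0..<N}" by (auto simp: inj_on_def)
  moreover have "(\<lambda>t. int (N - t)) ` {0..<N} = {1..int N}"
  proof (rule set_eqI, rule iffI)
    fix x assume "x \<in> (\<lambda>t. int (N - t)) ` {0..<N}" then show "x \<in> {1..int N}" by auto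
  next
    fix x assume x: "x \<in> {1..int N}"
    then have "x = int (N - (N - nat x))" "N - nat x \<in> {0..<N}" by auto
    then show "x \<in> (\<lambda>t. int (N - t)) ` {0..<N}" by blast
  qed
  ultimately show ?thesis unfolding PP_def by (simp add: distinct_map o_def)
qed

lemma ell_rho: "ell (map (\<lambda>t. int (N - t)) [0..<N]) = 0"
proof -
  let ?a = "map (\<lambda>t. int (N - t)) [0..<N]"
  have S1: "{(i, j). i < j \<and> j < length ?a \<and> ?a ! i < ?a ! j} = {}" by auto
  have S2: "{i. i < length ?a \<and> ?a ! i < 0} = {}" by auto
  have S3: "{(i, j). i < j \<and> j < length ?a \<and> ?a ! i + ?a ! j < 0} = {}" by auto
  show ?thesis unfolding ell_def inv_stat_def neg_stat_def nsp_stat_def S1 S2 S3 by simp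
qed

lemma base_case:
  "is_partition mu \<Longrightarrow> length mu \<le> n \<Longrightarrow> part mu 1 \<le> k \<Longrightarrow>
     PP (avec n k mu mu) (n + k) \<and> ell (avec n k mu mu) = int (sum_list mu)"
proof (induction "sum_list mu" arbitrary: mu rule: less_induct)
  case (less mu)
  show ?case
  proof (cases "mu = []")
    case True
    then show ?thesis using avec_empty[of n k] PP_rho[of "n + k"] ell_rho[of "n + k"] by (simp add: add.commute)
  next
    case False
    note mu = less.prems(1) and ln = less.prems(2) and pk = less.prems(3)
    define L where "L = length mu"
    define p where "p = last mu"
    define mu' where "mu' = rem mu"
    have L1: "1 \<le> L" unfolding L_def using False by (cases mu) auto
    have lp: "p = part mu L" unfolding p_def L_def by (rule last_part[OF False])
    have p1: "1 \<le> p" using part_pos[OF mu L1] lp L_def by simp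
    have pk': "p \<le> k" using part_mono[OF mu order_refl L1] lp pk by simp
    have mu'p: "is_partition mu'" unfolding mu'_def by (rule rem_partition[OF mu False])
    have z: "0 \<notin> set mu" using mu unfolding is_partition_def by simp
    have sum': "sum_list mu' < sum_list mu" using rem_sum[OF False z] unfolding mu'_def by simp
    have len': "length mu' \<le> n" using rem_len[OF False] ln unfolding mu'_def by simp
    have R: "\<And>i. part mu' i = (if i = L then part mu i - 1 else part mu i)"
      unfolding mu'_def L_def by (rule rem_part[OF False])
    have RC: "\<And>s. 1 \<le> s \<Longrightarrow> conj_part mu' s = (if s = p then L - 1 else conj_part mu s)"
      unfolding mu'_def L_def p_def by (rule rem_conj[OF mu False])
    have pk2: "part mu' 1 \<le> k" using R[of 1] pk by auto
    have IH: "PP (avec n k mu' mu') (n + k) \<and> ell (avec n k mu' mu') = int (sum_list mu')"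
      by (rule less.hyps[OF sum' mu'p len' pk2])
    have cl: "conj_part mu p = L" unfolding p_def L_def by (rule conj_part_last[OF mu False])
    define v where "v = int n + int p - int L"
    define i0 where "i0 = k - p"
    define j0 where "j0 = k + L - 1"
    define xs where "xs = avec n k mu' mu'"
    have i0j0: "i0 < j0" "j0 < length xs" "i0 < k" "k \<le> j0" unfolding i0_def j0_def xs_def
      using p1 pk' L1 ln unfolding L_def by auto
    have xi: "xs ! i0 = v + 1" unfolding xs_def using i0j0 RC[OF p1] p1 pk' L1
      by (simp add: avec_nth1 i0_def Xv_def v_def)
    have xj: "xs ! j0 = v"
    proof -
      have "j0 < k + n" using i0j0(2) unfolding xs_def by simp
      then have "xs ! j0 = Yv n mu' (j0 - k + 1)" unfolding xs_def using i0j0(4) by (simp add: avec_nth2)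
      moreover have "j0 - k + 1 = L" unfolding j0_def using L1 by simp
      ultimately show ?thesis using R[of L] p1 lp by (simp add: Yv_def v_def)
    qed
    have ys: "avec n k mu mu = xs[i0 := v, j0 := v + 1]"
    proof (rule nth_equalityI)
      show "length (avec n k mu mu) = length (xs[i0 := v, j0 := v + 1])" unfolding xs_def by simp
    next
      fix t assume "t < length (avec n k mu mu)"
      then have t: "t < k + n" by simp
      show "avec n k mu mu ! t = xs[i0 := v, j0 := v + 1] ! t"
      proof (cases "t < k")
        case True
        have s1: "1 \<le> k - t" using True by simp
        show ?thesis
        proof (cases "t = i0")
          case True
          then show ?thesis using i0j0 \<open>t < k\<close> cl p1 pk'
            by (simp add: avec_nth1 nth_list_update i0_def Xv_def v_def xs_def)
        next
          case False
          then have "k - t \<noteq> p" using \<open>t < k\<close> unfolding i0_def by auto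
          then show ?thesis using False i0j0 \<open>t < k\<close> RC[OF s1]
            by (simp add: avec_nth1 nth_list_update Xv_def xs_def)
        qed
      next
        case False
        show ?thesis
        proof (cases "t = j0")
          case True
          then show ?thesis using i0j0 t lp L1 ln
            by (simp add: avec_nth2 nth_list_update j0_def Yv_def v_def xs_def)
        next
          case ne: False
          then have "t - k + 1 \<noteq> L" using False unfolding j0_def by auto
          then show ?thesis using ne False i0j0 t R[of "t - k + 1"]
            by (simp add: avec_nth2 nth_list_update Yv_def xs_def)
        qed
      qed
    qed
    obtain A B C where AB: "xs = A @ [v + 1] @ B @ [v] @ C" and ysd: "xs[i0 := v, j0 := v + 1] = A @ [v] @ B @ [v + 1] @ C"
      using swap_decomp[OF i0j0(1,2), of v "v + 1"] xi xj by metis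
    have pos: "\<forall>x\<in>set xs. 0 < x" unfolding xs_def by (rule avec_pos[OF mu'p len'])
    have dist: "distinct (map abs xs)" using IH unfolding PP_def xs_def by simp
    have dxs: "distinct xs" using dist by (simp add: distinct_map)
    have v0: "0 < v" using pos AB by auto
    have Z: "\<forall>z\<in>set (A @ B @ C). z > 0 \<and> z \<noteq> v \<and> z \<noteq> v + 1"
      using pos dxs unfolding AB by auto
    have e: "ell (A @ [v] @ B @ [v + 1] @ C) = ell (A @ [v + 1] @ B @ [v] @ C) + 1"
      by (rule ell_swap[OF v0 Z])
    have "PP (A @ [v] @ B @ [v + 1] @ C) (n + k)"
      using IH unfolding PP_def xs_def[symmetric] AB by (auto simp: ac_simps)
    moreover have "ell (A @ [v] @ B @ [v + 1] @ C) = int (sum_list mu)"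
    proof -
      have "ell xs = int (sum_list mu')" using IH xs_def by simp
      then have "ell (A @ [v + 1] @ B @ [v] @ C) = int (sum_list mu')" using AB by simp
      moreover have "sum_list mu' + 1 = sum_list mu" using rem_sum[OF False z] unfolding mu'_def .
      ultimately show ?thesis using e by simp
    qed
    ultimately show ?thesis unfolding ys ysd by simp
  qed
qed




definition Rset :: "nat list \<Rightarrow> nat \<Rightarrow> nat \<Rightarrow> (nat \<times> nat) set" where
  "Rset mu c e = {(i, s). (1 \<le> s \<and> s < c \<and> conj_part mu (Suc s) \<le> i \<and> i \<le> conj_part mu s)
                        \<or> (s = c \<and> e \<le> i \<and> i \<le> conj_part mu s)}"

lemma rim_box_0: "rim_box mu 0 = (length mu, 1)"
  unfolding rim_box_def by simp

lemma rim_box_Suc: "rim_box mu (Suc t) = rim_step mu (rim_box mu t)"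
  unfolding rim_box_def by simp

lemma walk:
  assumes mu: "is_partition mu" and ne: "mu \<noteq> []"
    and D: "\<forall>t<h. rim_box mu t \<in> diagram mu" and th: "t < h"
  shows "length mu - fst (rim_box mu t) + snd (rim_box mu t) = Suc t
       \<and> fst (rim_box mu t) \<le> length mu \<and> 1 \<le> snd (rim_box mu t)
       \<and> part mu (Suc (fst (rim_box mu t))) \<le> snd (rim_box mu t)
       \<and> rim_box mu ` {..t} = Rset mu (snd (rim_box mu t)) (fst (rim_box mu t))"
  using th
proof (induction t)
  case 0
  have L1: "1 \<le> length mu" using ne by (cases mu) auto
  have c1: "conj_part mu 1 = length mu" by (rule conj_part_1[OF mu])
  have "Rset mu 1 (length mu) = {(length mu, 1)}"
    unfolding Rset_def using c1 by auto
  then show ?case using L1 by (simp add: rim_box_0 part_zero)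
next
  case (Suc t)
  then have tl: "t < h" by simp
  note IH = Suc.IH[OF tl]
  obtain i j where b: "rim_box mu t = (i, j)" by (cases "rim_box mu t")
  have inD: "(i, j) \<in> diagram mu" using D tl b by metis
  have inD': "rim_box mu (Suc t) \<in> diagram mu" using D Suc.prems by blast
  have i1: "1 \<le> i" and j1: "1 \<le> j" and jp: "j \<le> part mu i" using inD by (auto simp: diagram_mem)
  have rim: "part mu (Suc i) \<le> j" using IH b by simp
  have time: "length mu - i + j = Suc t" "i \<le> length mu" using IH b by simp_all
  have Rt: "rim_box mu ` {..t} = Rset mu j i" using IH b by simp
  have iconj: "i \<le> conj_part mu j" using conj_part_iff[OF mu j1 i1] jp by simp
  have img: "rim_box mu ` {..Suc t} = insert (rim_box mu (Suc t)) (rim_box mu ` {..t})"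
    by (simp add: atMost_Suc)
  show ?case
  proof (cases "j + 1 \<le> part mu i")
    case True
    then have bs: "rim_box mu (Suc t) = (i, Suc j)" by (simp add: rim_box_Suc b rim_step_def)
    have cj: "conj_part mu (Suc j) = i"
    proof (rule antisym)
      show "i \<le> conj_part mu (Suc j)" using conj_part_iff[OF mu _ i1, of "Suc j"] True by simp
      have "\<not> Suc i \<le> conj_part mu (Suc j)" using conj_part_iff[OF mu _ _, of "Suc j" "Suc i"] rim by simp
      then show "conj_part mu (Suc j) \<le> i" by simp
    qed
    have "Rset mu (Suc j) i = insert (i, Suc j) (Rset mu j i)"
      unfolding Rset_def using cj j1 by (auto simp: less_Suc_eq)
    then show ?thesis using time rim j1 True bs img Rt by simp
  next
    case False
    then have bs: "rim_box mu (Suc t) = (i - 1, j)" by (simp add: rim_box_Suc b rim_step_def)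
    have i2: "2 \<le> i" using inD' bs by (auto simp: diagram_mem)
    have "Rset mu j (i - 1) = insert (i - 1, j) (Rset mu j i)"
      unfolding Rset_def using iconj i2 by auto
    then show ?thesis using time False bs img Rt i2 j1 by auto
  qed
qed




lemma strip:
  assumes mu: "is_partition mu" and nl: "n < length mu"
    and hdef: "h = 2 * (length mu - n - 1)"
    and ex: "rim_strip_exists mu h" and nem: "rim_strip mu h \<noteq> {}"
    and nu: "is_partition nu" and dnu: "diagram nu = diagram mu - rim_strip mu h"
    and pk: "part mu 1 \<le> k"
  shows "\<exists>c. 1 \<le> c \<and> c \<le> k \<and> ncols (rim_strip mu h) = c \<and> sum_list nu + h = sum_list mu
     \<and> (\<forall>s. 1 \<le> s \<longrightarrow> s < c \<longrightarrow> Xv n nu s = Xv n mu (Suc s))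
     \<and> Xv n nu c = int (length mu - n - 1)
     \<and> (\<forall>s. c < s \<longrightarrow> Xv n nu s = Xv n mu s)
     \<and> part nu 1 \<le> k"
proof -
  have ne: "mu \<noteq> []" using nl by auto
  have D: "\<forall>t<h. rim_box mu t \<in> diagram mu" using ex unfolding rim_strip_exists_def .
  have h0: "0 < h" using nem unfolding rim_strip_def by (cases h) auto
  define T where "T = h - 1"
  have Th: "T < h" and hT: "{..<h} = {..T}" using h0 unfolding T_def by auto
  define e where "e = fst (rim_box mu T)"
  define c where "c = snd (rim_box mu T)"
  have W: "length mu - e + c = Suc T" "e \<le> length mu" "1 \<le> c" "rim_box mu ` {..T} = Rset mu c e"
    using walk[OF mu ne D Th] unfolding e_def c_def by auto
  have R: "rim_strip mu h = Rset mu c e" unfolding rim_strip_def hT W(4) ..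
  have ecD: "(e, c) \<in> diagram mu" using D Th unfolding e_def c_def by simp
  then have e1: "1 \<le> e" and cpe: "c \<le> part mu e" by (auto simp: diagram_mem)
  have ck: "c \<le> k" using cpe part_mono[OF mu order_refl e1] pk by simp
  have ec: "e \<le> conj_part mu c" using conj_part_iff[OF mu W(3) e1] cpe by simp
  have inj: "inj_on (rim_box mu) {..<h}"
  proof (rule inj_onI)
    fix a b assume a: "a \<in> {..<h}" and b: "b \<in> {..<h}" and eq: "rim_box mu a = rim_box mu b"
    have ah: "a < h" and bh: "b < h" using a b by simp_all
    have A: "length mu - fst (rim_box mu a) + snd (rim_box mu a) = Suc a"
      using conjunct1[OF walk[OF mu ne D ah]] .
    have B: "length mu - fst (rim_box mu b) + snd (rim_box mu b) = Suc b"
      using conjunct1[OF walk[OF mu ne D bh]] .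
    have "length mu - fst (rim_box mu b) + snd (rim_box mu b) = Suc a" using A unfolding eq .
    then have "Suc a = Suc b" using B by (rule subst)
    then show "a = b" by (rule Suc_inject)
  qed
  have cardR: "card (rim_strip mu h) = h" unfolding rim_strip_def using card_image[OF inj] by simp
  have RD: "rim_strip mu h \<subseteq> diagram mu" using D unfolding rim_strip_def by auto
  have finD: "finite (diagram mu)" unfolding diagram_mem
    by (rule finite_subset[of _ "{..length mu} \<times> {..part mu 1}"]) (auto simp: diagram_def intro: order_trans[OF _ part_mono[OF mu]])
  have sum: "sum_list nu + h = sum_list mu"
    unfolding sum_list_card_diagram dnu using card_Diff_subset[OF finite_subset[OF RD finD] RD] cardR
      card_mono[OF finD RD] by simp
  have cols: "snd ` Rset mu c e = {1..c}"
  proof (rule set_eqI, rule iffI)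
    fix s assume "s \<in> snd ` Rset mu c e" then show "s \<in> {1..c}" using W(3) unfolding Rset_def by auto
  next
    fix s assume s: "s \<in> {1..c}"
    show "s \<in> snd ` Rset mu c e"
    proof (cases "s < c")
      case True
      have "conj_part mu (Suc s) \<le> conj_part mu s" using conj_part_mono[OF mu] s by simp
      then have "(conj_part mu s, s) \<in> Rset mu c e" unfolding Rset_def using True s by auto
      then show ?thesis by force
    next
      case False
      then have "s = c" using s by simp
      then have "(e, s) \<in> Rset mu c e" unfolding Rset_def using ec by auto
      then show ?thesis by force
    qed
  qed
  have nc: "ncols (rim_strip mu h) = c" unfolding ncols_def R cols by simp
  have memnu: "i \<le> conj_part nu s \<longleftrightarrow> i \<le> conj_part mu s \<and> (i, s) \<notin> Rset mu c e"
    if i1: "1 \<le> i" and s1: "1 \<le> s" for i s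
  proof -
    have "i \<le> conj_part nu s \<longleftrightarrow> (i, s) \<in> diagram nu"
      using conj_part_iff[OF nu s1 i1] diagram_mem_part[OF s1] i1 by simp
    also have "\<dots> \<longleftrightarrow> (i, s) \<in> diagram mu \<and> (i, s) \<notin> Rset mu c e" unfolding dnu R by simp
    also have "(i, s) \<in> diagram mu \<longleftrightarrow> i \<le> conj_part mu s"
      using conj_part_iff[OF mu s1 i1] diagram_mem_part[OF s1] i1 by simp
    finally show ?thesis .
  qed
  have cs1: "1 \<le> conj_part mu (Suc s)" if "s < c" for s
  proof -
    have "Suc s \<le> part mu 1" using that cpe part_mono[OF mu order_refl e1] by simp
    then show ?thesis using conj_part_iff[OF mu _ order_refl, of "Suc s"] by simp
  qed
  have nu_lt: "conj_part nu s = conj_part mu (Suc s) - 1" if s1: "1 \<le> s" and sc: "s < c" for s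
  proof (rule nat_eq_by_iff)
    fix i :: nat assume i1: "1 \<le> i"
    have mono: "conj_part mu (Suc s) \<le> conj_part mu s" using conj_part_mono[OF mu s1] by simp
    show "i \<le> conj_part nu s \<longleftrightarrow> i \<le> conj_part mu (Suc s) - 1"
      using memnu[OF i1 s1] sc s1 mono cs1[OF sc] unfolding Rset_def by auto
  qed
  have nu_eq: "conj_part nu c = e - 1"
  proof (rule nat_eq_by_iff)
    fix i :: nat assume i1: "1 \<le> i"
    show "i \<le> conj_part nu c \<longleftrightarrow> i \<le> e - 1"
      using memnu[OF i1 W(3)] ec e1 unfolding Rset_def by auto
  qed
  have nu_gt: "conj_part nu s = conj_part mu s" if sc: "c < s" for s
  proof (rule nat_eq_by_iff)
    fix i :: nat assume i1: "1 \<le> i"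
    have s1: "1 \<le> s" using sc W(3) by simp
    show "i \<le> conj_part nu s \<longleftrightarrow> i \<le> conj_part mu s"
      using memnu[OF i1 s1] sc unfolding Rset_def by auto
  qed
  have X1: "\<forall>s. 1 \<le> s \<longrightarrow> s < c \<longrightarrow> Xv n nu s = Xv n mu (Suc s)"
    using nu_lt cs1 unfolding Xv_def by fastforce
  have hT': "h = Suc T" using h0 T_def by simp
  have X2: "Xv n nu c = int (length mu - n - 1)"
    unfolding Xv_def nu_eq using W(1) W(2) e1 hdef hT' nl by simp
  have X3: "\<forall>s. c < s \<longrightarrow> Xv n nu s = Xv n mu s" using nu_gt unfolding Xv_def by simp
  have pnu: "part nu 1 \<le> k"
  proof (cases "part nu 1 = 0")
    case False
    then have "(1, part nu 1) \<in> diagram nu" unfolding diagram_mem using part_nz[of nu 1] by auto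
    then have "(1, part nu 1) \<in> diagram mu" unfolding dnu by simp
    then show ?thesis using pk by (simp add: diagram_mem)
  qed simp
  show ?thesis using W(3) ck nc sum X1 X2 X3 pnu by blast
qed




lemma Xv_strict:
  assumes mu: "is_partition mu" and s1: "1 \<le> s" and ss: "s < s'"
  shows "Xv n mu s < Xv n mu s'"
  using conj_part_mono[OF mu s1, of s'] ss unfolding Xv_def by simp

lemma upt_split3:
  assumes "1 \<le> c" "c \<le> k"
  shows "[0..<k] = [0..<k - c] @ [k - c..<k - 1] @ [k - 1]"
proof -
  have "[0..<k] = [0..<k - 1] @ [k - 1]" using upt_Suc_append[of 0 "k - 1"] assms by simp
  moreover have "[0..<k - 1] = [0..<k - c] @ [k - c..<k - 1]"
    using upt_add_eq_append[of 0 "k - c" "c - 1"] assms by simp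
  ultimately show ?thesis by simp
qed

lemma upt_split3':
  assumes "1 \<le> c" "c \<le> k"
  shows "[0..<k] = [0..<k - c] @ [k - c] @ map Suc [k - c..<k - 1]"
proof -
  have "[0..<k] = [0..<k - c] @ [k - c..<k]" using upt_add_eq_append[of 0 "k - c" c] assms by simp
  moreover have "[k - c..<k] = [k - c] @ [Suc (k - c)..<k]" using assms upt_conv_Cons[of "k - c" k] by simp
  moreover have "map Suc [k - c..<k - 1] = [Suc (k - c)..<k]" using assms by (simp add: map_Suc_upt)
  ultimately show ?thesis by simp
qed

lemma main:
  "modif n mu i lam \<Longrightarrow> is_partition mu \<Longrightarrow> part mu 1 \<le> k \<Longrightarrow>
    PP (avec n k mu lam) (n + k) \<and> ell (avec n k mu lam) = int (sum_list mu) - int i \<and> is_partition lam"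
proof (induction rule: modif.induct)
  case (base mu)
  then show ?case using base_case[OF base.prems(1) base.hyps base.prems(2)] by simp
next
  case (step mu h nu i lam)
  note mu = step.prems(1) and pk = step.prems(2)
  obtain c where c1: "1 \<le> c" and ck: "c \<le> k" and nc: "ncols (rim_strip mu h) = c"
    and sum: "sum_list nu + h = sum_list mu"
    and X1: "\<forall>s. 1 \<le> s \<longrightarrow> s < c \<longrightarrow> Xv n nu s = Xv n mu (Suc s)"
    and X2: "Xv n nu c = int (length mu - n - 1)"
    and X3: "\<forall>s. c < s \<longrightarrow> Xv n nu s = Xv n mu s"
    and pnu: "part nu 1 \<le> k"
    using strip[OF mu step.hyps(1,2,3,4,5,6) pk] by blast
  have IH: "PP (avec n k nu lam) (n + k) \<and> ell (avec n k nu lam) = int (sum_list nu) - int i \<and> is_partition lam"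
    by (rule step.IH[OF step.hyps(5) pnu])
  have lamp: "is_partition lam" using IH by simp
  define m where "m = int (length mu - n - 1)"
  have h0: "0 < h" using step.hyps(4) unfolding rim_strip_def by (cases h) auto
  have m0: "0 < m" using h0 step.hyps(2) unfolding m_def by simp
  have X2': "Xv n nu c = m" using X2 unfolding m_def .
  have hm: "int h = 2 * m" using step.hyps(2) unfolding m_def by simp
  have Xmu1: "Xv n mu 1 = - m" unfolding Xv_def m_def conj_part_1[OF mu] using step.hyps(1) h0 step.hyps(2) by simp
  define f where "f = (\<lambda>t. Xv n mu (k - t))"
  define g where "g = (\<lambda>t. Xv n nu (k - t))"
  define P where "P = map f [0..<k - c]"
  define Q where "Q = map f [k - c..<k - 1]"
  define Yl where "Yl = map (\<lambda>r. Yv n lam (Suc r)) [0..<n]"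
  have amu: "avec n k mu lam = P @ Q @ [- m] @ Yl"
  proof -
    have "avec n k mu lam = map f [0..<k] @ Yl" unfolding avec_def f_def Yl_def ..
    also have "map f [0..<k] = P @ Q @ [f (k - 1)]" unfolding P_def Q_def upt_split3[OF c1 ck] by simp
    also have "f (k - 1) = - m" unfolding f_def using Xmu1 c1 ck by simp
    finally show ?thesis by simp
  qed
  have anu: "avec n k nu lam = P @ [m] @ Q @ Yl"
  proof -
    have "avec n k nu lam = map g [0..<k] @ Yl" unfolding avec_def g_def Yl_def ..
    also have "map g [0..<k] = map g [0..<k - c] @ [g (k - c)] @ map (g \<circ> Suc) [k - c..<k - 1]"
      unfolding upt_split3'[OF c1 ck] by simp
    also have "map g [0..<k - c] = P" unfolding P_def
      by (rule map_cong) (use X3 in \<open>auto simp: f_def g_def\<close>)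
    also have "g (k - c) = m" unfolding g_def m_def using X2 ck by simp
    also have "map (g \<circ> Suc) [k - c..<k - 1] = Q" unfolding Q_def
    proof (rule map_cong)
      fix t assume "t \<in> set [k - c..<k - 1]"
      then have t: "k - c \<le> t" "t < k - 1" by auto
      then have "1 \<le> k - Suc t" "k - Suc t < c" by auto
      then have "Xv n nu (k - Suc t) = Xv n mu (Suc (k - Suc t))" using X1 by blast
      moreover have "Suc (k - Suc t) = k - t" using t by simp
      ultimately show "(g \<circ> Suc) t = f t" unfolding g_def f_def by simp
    qed simp
    finally show ?thesis by simp
  qed
  have PPnu: "PP (P @ [m] @ Q @ Yl) (n + k)" using IH anu by simp
  have distnu: "distinct (map abs (P @ [m] @ Q @ Yl))" using PPnu unfolding PP_def by simp
  have Ypos: "\<forall>y\<in>set Yl. 0 < y" unfolding Yl_def Yv_def by auto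
  have Yne: "\<forall>y\<in>set Yl. y \<noteq> m"
  proof
    fix y assume y: "y \<in> set Yl"
    then have "abs y \<in> set (map abs Yl)" by simp
    moreover have "abs m \<notin> set (map abs Yl)" using distnu by simp
    ultimately show "y \<noteq> m" by auto
  qed
  have Qb: "\<forall>z\<in>set Q. - m < z \<and> z < m"
  proof
    fix z assume "z \<in> set Q"
    then obtain t where t: "k - c \<le> t" "t < k - 1" and z: "z = Xv n mu (k - t)" unfolding Q_def f_def by auto
    have s: "1 < k - t" "k - t \<le> c" using t by auto
    have "- m < z" unfolding z Xmu1[symmetric] by (rule Xv_strict[OF mu order_refl s(1)])
    moreover have "z = Xv n nu (k - t - 1)" using X1 s z by (metis Suc_diff_1 less_imp_le_nat less_one not_le
          diff_less zero_less_one less_le_trans le_add_diff_inverse2 add_diff_cancel_left' Suc_le_eq order.strict_trans2)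
    moreover have "Xv n nu (k - t - 1) < Xv n nu c" by (rule Xv_strict[OF step.hyps(5)]) (use s in auto)
    ultimately show "- m < z \<and> z < m" using X2' by simp
  qed
  have Pb: "\<forall>z\<in>set P. m < z"
  proof
    fix z assume "z \<in> set P"
    then obtain t where t: "t < k - c" and z: "z = Xv n mu (k - t)" unfolding P_def f_def by auto
    have "c < k - t" using t by simp
    then have "z = Xv n nu (k - t)" using X3 z by simp
    moreover have "Xv n nu c < Xv n nu (k - t)" by (rule Xv_strict[OF step.hyps(5) c1 \<open>c < k - t\<close>])
    ultimately show "m < z" using X2' by simp
  qed
  have em: "ell (P @ Q @ [-m] @ Yl) = ell (P @ [m] @ Q @ Yl) + 1 + int (length Q) + 2 * int (length (filter (\<lambda>y. y < m) Yl))"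
    by (rule ell_move[OF m0 Qb]) (use Ypos Yne in auto)
  have lQ: "length Q = c - 1" unfolding Q_def using c1 ck by simp
  have cnt1: "length (filter (\<lambda>x. x < m) (map abs (P @ [m] @ Q @ Yl))) = nat (m - 1)"
  proof -
    define xs where "xs = map abs (P @ [m] @ Q @ Yl)"
    have dx: "distinct xs" and sx: "set xs = {1..int (n + k)}" using PPnu unfolding PP_def xs_def by simp_all
    have "length (filter (\<lambda>x. x < m) xs) = card ({x. x < m} \<inter> set xs)"
      by (rule distinct_length_filter[OF dx])
    then have "length (filter (\<lambda>x. x < m) xs) = card ({x. x < m} \<inter> {1..int (n + k)})"
      unfolding sx .
    then have "length (filter (\<lambda>x. x < m) (map abs (P @ [m] @ Q @ Yl))) = card ({x. x < m} \<inter> {1..int (n + k)})"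
      unfolding xs_def .
    also have "{x. x < m} \<inter> {1..int (n + k)} = {1..m - 1}"
    proof -
      have "abs m \<in> set (map abs (P @ [m] @ Q @ Yl))" by simp
      then have "m \<le> int (n + k)" using PPnu m0 unfolding PP_def by auto
      then show ?thesis by auto
    qed
    finally show ?thesis by simp
  qed
  have "filter (\<lambda>x. x < m) (map abs P) = []" using Pb m0 by (auto simp: filter_empty_conv)
  moreover have "filter (\<lambda>x. x < m) (map abs Q) = map abs Q" using Qb by (auto simp: filter_id_conv)
  moreover have "map abs Yl = Yl" using Ypos by (induction Yl) auto
  ultimately have cnt2: "length (filter (\<lambda>x. x < m) (map abs (P @ [m] @ Q @ Yl))) = length Q + length (filter (\<lambda>y. y < m) Yl)"
    by simp
  have cntY: "int (length (filter (\<lambda>y. y < m) Yl)) = m - int c"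
    using cnt1 cnt2 lQ m0 c1 by linarith
  have PPmu: "PP (P @ Q @ [- m] @ Yl) (n + k)"
    using PPnu unfolding PP_def by (auto simp: ac_simps)
  have "ell (P @ Q @ [- m] @ Yl) = int (sum_list mu) - int (ncols (rim_strip mu h) + i)"
    using em IH anu cntY lQ c1 nc sum hm by simp
  then show ?case using PPmu amu lamp by simp
qed




lemma rho_nth: "t < N \<Longrightarrow> rho N ! t = int (N - t)"
  unfolding rho_def by simp

lemma rho_length[simp]: "length (rho N) = N"
  unfolding rho_def by simp

lemma realize:
  assumes pp: "PP a N" and len: "length a = N"
  shows "\<exists>w \<in> signed_perms N. w (rho N) = a"
proof -
  define \<sigma> where "\<sigma> = (\<lambda>i. N - nat \<bar>a ! i\<bar>)"
  define \<epsilon> where "\<epsilon> = (\<lambda>i. if a ! i < 0 then -1 else (1::int))"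
  define w where "w = (\<lambda>x::int list. map (\<lambda>i. \<epsilon> i * x ! \<sigma> i) [0..<N])"
  have dist: "distinct (map abs a)" and st: "set (map abs a) = {1..int N}" using pp unfolding PP_def by auto
  have rng: "1 \<le> \<bar>a ! i\<bar> \<and> \<bar>a ! i\<bar> \<le> int N" if "i < N" for i
  proof -
    have "\<bar>a ! i\<bar> \<in> set (map abs a)" using that len by auto
    then show ?thesis using st by auto
  qed
  have inj: "inj_on \<sigma> {..<N}"
  proof (rule inj_onI)
    fix i j assume i: "i \<in> {..<N}" and j: "j \<in> {..<N}" and e: "\<sigma> i = \<sigma> j"
    have b: "nat \<bar>a ! i\<bar> \<le> N" "nat \<bar>a ! j\<bar> \<le> N" using rng[of i] rng[of j] i j by (simp_all add: nat_le_iff)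
    then have "nat \<bar>a ! i\<bar> = nat \<bar>a ! j\<bar>" using e unfolding \<sigma>_def by linarith
    then have "\<bar>a ! i\<bar> = \<bar>a ! j\<bar>" by simp
    then have "map abs a ! i = map abs a ! j" using i j len by simp
    then show "i = j" using nth_eq_iff_index_eq[OF dist] i j len by simp
  qed
  have sub: "\<sigma> ` {..<N} \<subseteq> {..<N}" using rng unfolding \<sigma>_def by force
  have bij: "bij_betw \<sigma> {..<N} {..<N}"
    unfolding bij_betw_def using inj endo_inj_surj[OF _ sub inj] by simp
  have w_in: "w \<in> signed_perms N"
  proof -
    have e: "\<forall>i. \<epsilon> i = 1 \<or> \<epsilon> i = -1" unfolding \<epsilon>_def by auto
    have "\<forall>x. length x = N \<longrightarrow> w x = map (\<lambda>i. \<epsilon> i * x ! \<sigma> i) [0..<N]" unfolding w_def by simp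
    then show ?thesis unfolding signed_perms_def using bij e by blast
  qed
  have "w (rho N) = a"
  proof (rule nth_equalityI)
    show "length (w (rho N)) = length a" unfolding w_def using len by simp
  next
    fix i assume "i < length (w (rho N))"
    then have i: "i < N" unfolding w_def by simp
    have si: "\<sigma> i < N" using sub i by auto
    have nb: "nat \<bar>a ! i\<bar> \<le> N" using rng[OF i] by (simp add: nat_le_iff)
    have "rho N ! \<sigma> i = int (N - (N - nat \<bar>a ! i\<bar>))" using rho_nth[OF si] unfolding \<sigma>_def by simp
    also have "\<dots> = int (nat \<bar>a ! i\<bar>)" using nb by simp
    also have "\<dots> = \<bar>a ! i\<bar>" by simp
    finally have "rho N ! \<sigma> i = \<bar>a ! i\<bar>" .
    then show "w (rho N) ! i = a ! i" unfolding w_def \<epsilon>_def using i by auto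
  qed
  then show ?thesis using w_in by blast
qed

theorem lemma2p3:
  fixes n k :: nat and mu lam :: "nat list" and i :: nat
  assumes "is_partition mu"
    and "part mu 1 \<le> k"
    and "modif n mu i lam"
  shows "\<exists>w \<in> signed_perms (n + k).
           (let a = w (rho (n + k)) in
              (\<forall>t. t + 1 < k \<longrightarrow> a ! t > a ! (t + 1)) \<and>
              (\<forall>t. k \<le> t \<and> t + 1 < k + n \<longrightarrow> a ! t > a ! (t + 1)) \<and>
              (\<forall>t. k \<le> t \<and> t < k + n \<longrightarrow> a ! t > 0) \<and>
              int (coxeter_length (n + k) w) = int (sum_list mu) - int i \<and>
              map (\<lambda>t. a ! t - rho (n + k) ! t) [0..<n + k] =
                map (\<lambda>t. - int (conj_part mu (k - t))) [0..<k] @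
                map (\<lambda>t. int (part lam (t + 1))) [0..<n])"
proof -
  define a where "a = avec n k mu lam"
  have M: "PP a (n + k) \<and> ell a = int (sum_list mu) - int i \<and> is_partition lam"
    unfolding a_def by (rule main[OF assms(3,1,2)])
  have lam: "is_partition lam" using M by simp
  have la: "length a = n + k" unfolding a_def by simp
  obtain w where w: "w \<in> signed_perms (n + k)" and wa: "w (rho (n + k)) = a"
    using realize[OF conjunct1[OF M] la] by blast
  have c1: "\<forall>t. t + 1 < k \<longrightarrow> a ! t > a ! (t + 1)"
  proof (intro allI impI)
    fix t assume t: "t + 1 < k"
    have "Xv n mu (k - (t + 1)) < Xv n mu (k - t)"
      by (rule Xv_strict[OF assms(1)]) (use t in auto)
    then show "a ! t > a ! (t + 1)" unfolding a_def using t by (simp add: avec_nth1)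
  qed
  have c2: "\<forall>t. k \<le> t \<and> t + 1 < k + n \<longrightarrow> a ! t > a ! (t + 1)"
  proof (intro allI impI)
    fix t assume t: "k \<le> t \<and> t + 1 < k + n"
    have "part lam (t - k + 2) \<le> part lam (t - k + 1)" by (rule part_mono[OF lam]) auto
    then have "Yv n lam (t + 1 - k + 1) < Yv n lam (t - k + 1)" unfolding Yv_def using t
      by (simp add: Suc_diff_le)
    then show "a ! t > a ! (t + 1)" unfolding a_def using t by (simp add: avec_nth2)
  qed
  have c3: "\<forall>t. k \<le> t \<and> t < k + n \<longrightarrow> a ! t > 0"
  proof (intro allI impI)
    fix t assume t: "k \<le> t \<and> t < k + n"
    then show "a ! t > 0" unfolding a_def by (simp add: avec_nth2 Yv_def)
  qed
  have c4: "int (coxeter_length (n + k) w) = int (sum_list mu) - int i"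
    using M wa unfolding coxeter_length_def ell_def Let_def by simp
  have c5: "map (\<lambda>t. a ! t - rho (n + k) ! t) [0..<n + k] =
                map (\<lambda>t. - int (conj_part mu (k - t))) [0..<k] @
                map (\<lambda>t. int (part lam (t + 1))) [0..<n]"
  proof (rule nth_equalityI)
    fix t assume "t < length (map (\<lambda>t. a ! t - rho (n + k) ! t) [0..<n + k])"
    then have t: "t < n + k" by simp
    show "map (\<lambda>t. a ! t - rho (n + k) ! t) [0..<n + k] ! t =
          (map (\<lambda>t. - int (conj_part mu (k - t))) [0..<k] @ map (\<lambda>t. int (part lam (t + 1))) [0..<n]) ! t"
    proof (cases "t < k")
      case True
      then show ?thesis using t unfolding a_def
        by (simp add: nth_append avec_nth1 rho_nth Xv_def)
    next
      case False
      then have "t - k < n" using t by simp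
      then show ?thesis using t False unfolding a_def
        by (simp add: nth_append avec_nth2 rho_nth Yv_def)
    qed
  qed simp
  show ?thesis using w wa c1 c2 c3 c4 c5 unfolding Let_def by blast
qed


end
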